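(* Let $s\ge 3$ and let $\lambda$ be an $(s,s+1,s+2)$-core partition of maximum size among all $(s,s+1,s+2)$-core partitions. If $\beta(\lambda)$ contains an element $i\in B_k$ (for some $0\le k\le \lfloor s/2\rfloor-1$), then $\beta(\lambda)$ contains every integer in $\{i,i+1,\ldots,(k+1)s-1\}$.
   Context: The $\beta$-set $\beta(\lambda)$ of a partition is the set of hook lengths of the boxes in its first column. An $(s,s+1,s+2)$-core is a partition with no hook length divisible by $s$, $s+1$ or $s+2$. For $s\ge 3$ and $0\le k\le\lfloor s/2\rfloor-1$, $B_k=\{1+k(s+2),\ldots,(k+1)s-1\}$; these sets partition the set $T_s$ of positive integers not expressible as $k_1s+k_2(s+1)+k_3(s+2)$ with $k_i\in\mathbb{N}$, and $\beta$-sets of $(s,s+1,s+2)$-cores are exactly the order ideals of $T_s$ under the order generated by $y>y-a$ for $y,y-a\in T_s$, $a\in\{s,s+1,s+2\}$. *)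

theory Defs
  imports Main
begin

definition is_partition :: "nat list \<Rightarrow> bool" where
  "is_partition xs \<longleftrightarrow> sorted_wrt (\<ge>) xs \<and> (\<forall>x\<in>set xs. 0 < x)"

definition psize :: "nat list \<Rightarrow> nat" where
  "psize xs = sum_list xs"

definition leg :: "nat list \<Rightarrow> nat \<Rightarrow> nat \<Rightarrow> nat" where
  "leg xs i j = card {i'. i < i' \<and> i' < length xs \<and> j < xs ! i'}"

definition hook :: "nat list \<Rightarrow> nat \<Rightarrow> nat \<Rightarrow> nat" where
  "hook xs i j = (xs ! i - j - 1) + leg xs i j + 1"

definition hooks :: "nat list \<Rightarrow> nat set" where
  "hooks xs = {hook xs i j | i j. i < length xs \<and> j < xs ! i}"

definition beta :: "nat list \<Rightarrow> nat set" where
  "beta xs = {hook xs i 0 | i. i < length xs}"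

definition is_core3 :: "nat \<Rightarrow> nat list \<Rightarrow> bool" where
  "is_core3 s xs \<longleftrightarrow> (\<forall>h\<in>hooks xs. \<not> s dvd h \<and> \<not> (s+1) dvd h \<and> \<not> (s+2) dvd h)"

definition Bset :: "nat \<Rightarrow> nat \<Rightarrow> nat set" where
  "Bset s k = {1 + k*(s+2) .. (k+1)*s - 1}"

end

theory Submission
  imports Defs
begin


definition bt :: "nat list \<Rightarrow> nat \<Rightarrow> nat" where
  "bt xs i = xs!i + (length xs - 1 - i)"

lemma part_pos: "is_partition xs \<Longrightarrow> i < length xs \<Longrightarrow> 0 < xs!i"
  unfolding is_partition_def by (auto simp: nth_mem)

lemma part_mono: "is_partition xs \<Longrightarrow> i \<le> i' \<Longrightarrow> i' < length xs \<Longrightarrow> xs!i' \<le> xs!i"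
proof (cases "i = i'")
  case False
  assume "is_partition xs" "i \<le> i'" "i' < length xs"
  then show ?thesis using False sorted_wrt_nth_less[of "(\<ge>)" xs i i'] unfolding is_partition_def by simp
qed simp

lemma hook0: assumes "is_partition xs" "i < length xs" shows "hook xs i 0 = bt xs i"
proof -
  have "{i'. i < i' \<and> i' < length xs \<and> 0 < xs ! i'} = {i<..<length xs}"
    using part_pos[OF assms(1)] by auto
  then have "leg xs i 0 = length xs - Suc i" unfolding leg_def by simp
  then show ?thesis using part_pos[OF assms] unfolding hook_def bt_def by simp
qed

lemma beta_bt: "is_partition xs \<Longrightarrow> beta xs = bt xs ` {..<length xs}"
  unfolding beta_def image_def by (auto simp: hook0) (metis hook0)

lemma bt_strict: "is_partition xs \<Longrightarrow> i < i' \<Longrightarrow> i' < length xs \<Longrightarrow> bt xs i' < bt xs i"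
  using part_mono[of xs i i'] unfolding bt_def by simp

lemma bt_inj: "is_partition xs \<Longrightarrow> inj_on (bt xs) {..<length xs}"
proof (rule inj_onI, rule ccontr)
  fix a b assume P: "is_partition xs" and ab: "a \<in> {..<length xs}" "b \<in> {..<length xs}" "bt xs a = bt xs b" "a \<noteq> b"
  show False
  proof (cases "a < b")
    case True then show False using bt_strict[OF P, of a b] ab by simp
  next
    case False then have "b < a" using ab by simp
    then show False using bt_strict[OF P, of b a] ab by simp
  qed
qed

lemma card_beta: "is_partition xs \<Longrightarrow> card (beta xs) = length xs"
  by (simp add: beta_bt card_image bt_inj)

lemma finite_beta: "is_partition xs \<Longrightarrow> finite (beta xs)"
  by (simp add: beta_bt)

lemma bt_pos: "is_partition xs \<Longrightarrow> i < length xs \<Longrightarrow> 0 < bt xs i"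
  using part_pos unfolding bt_def by fastforce

lemma zero_notin_beta: "is_partition xs \<Longrightarrow> 0 \<notin> beta xs"
  using bt_pos beta_bt by fastforce

lemma psize_beta: assumes "is_partition xs"
  shows "psize xs + (\<Sum>i<length xs. length xs - 1 - i) = \<Sum>(beta xs)"
proof -
  have "\<Sum>(beta xs) = (\<Sum>i<length xs. bt xs i)"
    by (simp add: beta_bt[OF assms] sum.reindex[OF bt_inj[OF assms]])
  also have "\<dots> = (\<Sum>i<length xs. xs!i) + (\<Sum>i<length xs. length xs - 1 - i)"
    unfolding bt_def by (simp only: sum.distrib)
  finally show ?thesis unfolding psize_def by (simp add: sum_list_sum_nth atLeast0LessThan)
qed

definition cj :: "nat list \<Rightarrow> nat \<Rightarrow> nat" where
  "cj xs j = card {i'. i' < length xs \<and> j < xs!i'}"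

lemma down_closed: assumes "finite P" "\<And>a b. b \<in> P \<Longrightarrow> a < b \<Longrightarrow> a \<in> P"
  shows "P = {..<card P}"
proof (cases "P = {}")
  case True then show ?thesis by simp
next
  case False
  define M where "M = Max P"
  have "P = {..M}"
  proof
    show "P \<subseteq> {..M}" using assms(1) M_def by auto
    show "{..M} \<subseteq> P"
    proof
      fix a assume "a \<in> {..M}"
      then have "a = M \<or> a < M" by auto
      moreover have "M \<in> P" using M_def assms(1) False by simp
      ultimately show "a \<in> P" using assms(2) by blast
    qed
  qed
  then show ?thesis by (simp add: lessThan_Suc_atMost[symmetric])
qed

lemma cj_set: assumes "is_partition xs"
  shows "{i'. i' < length xs \<and> j < xs!i'} = {..<cj xs j}"
  unfolding cj_def
proof (rule down_closed)
  show "finite {i'. i' < length xs \<and> j < xs ! i'}" by simp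
next
  fix a b assume b: "b \<in> {i'. i' < length xs \<and> j < xs ! i'}" and ab: "a < b"
  then have "xs!b \<le> xs!a" using part_mono[OF assms, of a b] by simp
  then show "a \<in> {i'. i' < length xs \<and> j < xs ! i'}" using b ab by simp
qed

lemma cj_le: "cj xs j \<le> length xs"
proof -
  have "{i'. i' < length xs \<and> j < xs!i'} \<subseteq> {..<length xs}" by auto
  then show ?thesis unfolding cj_def by (metis card_lessThan card_mono finite_lessThan)
qed

lemma hook_gen: assumes P: "is_partition xs" and i: "i < length xs" and j: "j < xs!i"
  shows "hook xs i j = bt xs i - (j + length xs - cj xs j)"
    and "j + length xs - cj xs j \<notin> beta xs"
    and "j + length xs - cj xs j < bt xs i"
proof -
  let ?n = "length xs" let ?c = "cj xs j"
  have S: "{i'. i' < ?n \<and> j < xs!i'} = {..<?c}" by (rule cj_set[OF P])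
  have ic: "i < ?c" using S i j by blast
  have cn: "?c \<le> ?n" by (rule cj_le)
  have "{i'. i < i' \<and> i' < ?n \<and> j < xs!i'} = {i'. i' < ?n \<and> j < xs!i'} \<inter> {i<..}" by blast
  also have "\<dots> = {..<?c} \<inter> {i<..}" using S by simp
  also have "\<dots> = {i<..<?c}" by auto
  finally have "{i'. i < i' \<and> i' < ?n \<and> j < xs!i'} = {i<..<?c}" .
  then have "leg xs i j = ?c - Suc i" unfolding leg_def by simp
  then show "hook xs i j = bt xs i - (j + ?n - ?c)"
    unfolding hook_def bt_def using ic cn j by linarith
  show "j + ?n - ?c < bt xs i" unfolding bt_def using ic cn j i by simp
  show "j + ?n - ?c \<notin> beta xs"
  proof
    assume "j + ?n - ?c \<in> beta xs"
    then obtain i' where i': "i' < ?n" "j + ?n - ?c = bt xs i'" using beta_bt[OF P] by auto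
    show False
    proof (cases "i' < ?c")
      case True
      then have "j < xs!i'" using S by blast
      then show False using i' True cn unfolding bt_def by linarith
    next
      case False
      then have "\<not> j < xs!i'" using S i' by blast
      then show False using i' False cn unfolding bt_def by linarith
    qed
  qed
qed

lemma hooks_sub: assumes P: "is_partition xs" and h: "h \<in> hooks xs"
  shows "\<exists>x y. x \<in> beta xs \<and> y \<notin> beta xs \<and> y < x \<and> h = x - y"
proof -
  obtain i j where ij: "i < length xs" "j < xs!i" "h = hook xs i j" using h unfolding hooks_def by auto
  show ?thesis
    apply (rule exI[of _ "bt xs i"], rule exI[of _ "j + length xs - cj xs j"])
    using hook_gen[OF P ij(1,2)] ij beta_bt[OF P] by auto
qed

lemma hooks_sup: assumes P: "is_partition xs" and x: "x \<in> beta xs" and y: "y \<notin> beta xs" "y < x"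
  shows "x - y \<in> hooks xs"
proof -
  let ?n = "length xs"
  obtain i where i: "i < ?n" "x = bt xs i" using x beta_bt[OF P] by auto
  define f where "f j = j + ?n - cj xs j" for j
  define Y where "Y = {z. z < bt xs i \<and> z \<notin> beta xs}"
  have sub: "f ` {..<xs!i} \<subseteq> Y" unfolding Y_def f_def using hook_gen[OF P i(1)] by auto
  have cjm: "cj xs j' \<le> cj xs j" if "j < j'" for j j'
  proof -
    have "{i'. i' < ?n \<and> j' < xs!i'} \<subseteq> {i'. i' < ?n \<and> j < xs!i'}" using that by auto
    then show ?thesis unfolding cj_def by (rule card_mono[rotated]) auto
  qed
  have fm: "f j < f j'" if "j < j'" for j j'
    using cjm[OF that] cj_le[of xs j] cj_le[of xs j'] that unfolding f_def by simp
  have inj: "inj_on f {..<xs!i}"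
    by (rule inj_onI) (metis fm linorder_neqE_nat order_less_irrefl)
  have bsub: "beta xs \<inter> {..<bt xs i} = bt xs ` {i<..<?n}"
  proof
    show "beta xs \<inter> {..<bt xs i} \<subseteq> bt xs ` {i<..<?n}"
    proof
      fix z assume "z \<in> beta xs \<inter> {..<bt xs i}"
      then obtain i' where "i' < ?n" "z = bt xs i'" "bt xs i' < bt xs i" using beta_bt[OF P] by auto
      moreover have "i < i'"
      proof (rule ccontr)
        assume "\<not> i < i'"
        then have "i' = i \<or> i' < i" by auto
        then show False using calculation bt_strict[OF P, of i' i] i by auto
      qed
      ultimately show "z \<in> bt xs ` {i<..<?n}" by auto
    qed
    show "bt xs ` {i<..<?n} \<subseteq> beta xs \<inter> {..<bt xs i}"
      using bt_strict[OF P] beta_bt[OF P] by auto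
  qed
  have cb: "card (beta xs \<inter> {..<bt xs i}) = ?n - Suc i"
    unfolding bsub by (subst card_image) (auto intro: inj_on_subset[OF bt_inj[OF P]])
  have "Y = {..<bt xs i} - (beta xs \<inter> {..<bt xs i})" unfolding Y_def by auto
  then have "card Y = bt xs i - (?n - Suc i)"
    using cb by (simp add: card_Diff_subset)
  then have cY: "card Y = xs!i" unfolding bt_def by simp
  have fY: "finite Y" unfolding Y_def by simp
  have "card (f ` {..<xs!i}) = card Y" using cY card_image[OF inj] by simp
  then have "f ` {..<xs!i} = Y" using card_subset_eq[OF fY sub] by blast
  moreover have "y \<in> Y" using y i unfolding Y_def by simp
  ultimately obtain j where j: "j < xs!i" "y = f j" by auto
  then have "x - y = hook xs i j" using hook_gen(1)[OF P i(1) j(1)] i unfolding f_def by simp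
  then show ?thesis unfolding hooks_def using i j by auto
qed



definition CC :: "nat set \<Rightarrow> nat \<Rightarrow> bool" where
  "CC X s \<longleftrightarrow> (\<forall>x\<in>X. \<forall>a. (a = s \<or> a = s+1 \<or> a = s+2) \<longrightarrow> a \<le> x \<longrightarrow> x - a \<in> X)"

lemma core_CC: assumes P: "is_partition xs" and C: "is_core3 s xs" and s: "s \<ge> 1"
  shows "CC (beta xs) s"
  unfolding CC_def
proof (intro ballI allI impI)
  fix x a assume x: "x \<in> beta xs" and a: "a = s \<or> a = s+1 \<or> a = s+2" and ax: "a \<le> x"
  show "x - a \<in> beta xs"
  proof (rule ccontr)
    assume "x - a \<notin> beta xs"
    moreover have "s \<le> a" using a by auto
    then have "x - a < x" using ax s by linarith
    ultimately have "x - (x - a) \<in> hooks xs" using hooks_sup[OF P x] by blast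
    then have "a \<in> hooks xs" using ax by simp
    then have "\<not> s dvd a \<and> \<not> (s+1) dvd a \<and> \<not> (s+2) dvd a" using C unfolding is_core3_def by blast
    then show False using a by auto
  qed
qed

lemma walk: assumes "CC X s" "x \<in> X" "a = s \<or> a = s+1 \<or> a = s+2" "m*a \<le> x"
  shows "x - m*a \<in> X"
  using assms(4)
proof (induction m)
  case 0 then show ?case using assms(2) by simp
next
  case (Suc m)
  then have "x - m*a \<in> X" by simp
  moreover have "a \<le> x - m*a" using Suc.prems by simp
  moreover have "\<forall>x\<in>X. \<forall>a. (a = s \<or> a = s+1 \<or> a = s+2) \<longrightarrow> a \<le> x \<longrightarrow> x - a \<in> X"
    using assms(1) unfolding CC_def .
  ultimately have "x - m*a - a \<in> X" using assms(3) by blast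
  then show ?case by (simp add: algebra_simps)
qed

lemma CC_core: assumes P: "is_partition xs" and C: "CC (beta xs) s"
  shows "is_core3 s xs"
  unfolding is_core3_def
proof
  fix h assume "h \<in> hooks xs"
  then obtain x y where xy: "x \<in> beta xs" "y \<notin> beta xs" "y < x" "h = x - y"
    using hooks_sub[OF P] by blast
  have nd: False if a: "a = s \<or> a = s+1 \<or> a = s+2" and d: "a dvd h" for a
  proof -
    obtain m where "h = a*m" using d by auto
    then have "m*a = x - y" using xy by (simp add: mult.commute)
    then have "m*a \<le> x" "x - m*a = y" using xy by linarith+
    moreover have "x - m*a \<in> beta xs" using walk[OF C xy(1) a] calculation by blast
    ultimately show False using xy(2) by simp
  qed
  show "\<not> s dvd h \<and> \<not> (s + 1) dvd h \<and> \<not> (s + 2) dvd h" using nd by blast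
qed



lemma no_mid: assumes C: "CC X s" and z: "0 \<notin> X"
  shows "k*s \<le> x \<Longrightarrow> x \<le> k*(s+2) \<Longrightarrow> x \<notin> X"
proof (induction k arbitrary: x)
  case 0 then show ?case using z by simp
next
  case (Suc k)
  have e1: "Suc k * s = k*s + s" by simp
  have e2: "Suc k * (s+2) = k*s + 2*k + s + 2" by (simp add: algebra_simps)
  have e3: "k * (s+2) = k*s + 2*k" by (simp add: algebra_simps)
  have p1: "k*s + s \<le> x" and p2: "x \<le> k*s + 2*k + s + 2" using Suc.prems e1 e2 by linarith+
  show ?case
  proof
    assume xX: "x \<in> X"
    show False
    proof (cases "x - k*s \<le> s + 2")
      case True
      define a where "a = x - k*s"
      have a: "a = s \<or> a = s+1 \<or> a = s+2" using True p1 unfolding a_def by linarith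
      have ax: "a \<le> x" unfolding a_def by simp
      have "x - a \<in> X" using C xX a ax unfolding CC_def by blast
      moreover have "x - a = k*s" using p1 unfolding a_def by simp
      moreover have "k*s \<le> k*s" "k*s \<le> k*(s+2)" using e3 by linarith+
      ultimately show False using Suc.IH[of "k*s"] by simp
    next
      case False
      have "x - (s+2) \<in> X" using C xX False unfolding CC_def by auto
      moreover have "k*s \<le> x - (s+2)" "x - (s+2) \<le> k*(s+2)" using False p1 p2 e3
        by linarith+
      ultimately show False using Suc.IH by blast
    qed
  qed
qed

lemma Bset_iff: "x \<in> Bset s k \<longleftrightarrow> k*s + 2*k + 1 \<le> x \<and> x + 1 \<le> k*s + s"
proof -
  have e: "k*(s+2) = k*s+2*k" "(k+1)*s = k*s+s" by (simp_all add: algebra_simps)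
  show ?thesis unfolding Bset_def atLeastAtMost_iff e by arith
qed

lemma level: assumes C: "CC X s" and z: "0 \<notin> X" and x: "x \<in> X" and s: "s \<ge> 3"
  shows "x \<in> Bset s (x div s) \<and> x div s < s div 2"
proof -
  define k where "k = x div s"
  define r where "r = x mod s"
  have xe: "x = k*s + r" unfolding k_def r_def by simp
  have rs: "r < s" unfolding r_def using s by simp
  have r2: "2*k < r"
  proof (rule ccontr)
    assume "\<not> 2*k < r"
    moreover have "k*(s+2) = k*s + 2*k" by (simp add: algebra_simps)
    ultimately have "k*s \<le> x" "x \<le> k*(s+2)" using xe by linarith+
    then show False using no_mid[OF C z] x by blast
  qed
  have "2*k + 2 \<le> s" using r2 rs by simp
  then have "k < s div 2" by linarith
  moreover have "x \<in> Bset s k" unfolding Bset_iff using xe r2 rs by linarith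
  ultimately show ?thesis unfolding k_def by simp
qed

lemma Bset_div: assumes "x \<in> Bset s k" shows "x div s = k"
proof -
  have "k*s + 2*k + 1 \<le> x" "x + 1 \<le> k*s + s" using assms unfolding Bset_iff by auto
  then have "s * k \<le> x" "x < s * Suc k" by (simp_all add: mult.commute)
  then show ?thesis by (rule div_nat_eqI)
qed

lemma Bset_down: assumes "x \<in> Bset s (Suc k)" "a = s \<or> a = s+1 \<or> a = s+2"
  shows "a \<le> x \<and> x - a \<in> Bset s k"
proof -
  have e: "Suc k * s = k*s + s" by simp
  have h0: "Suc k * s + 2 * Suc k + 1 \<le> x \<and> x + 1 \<le> Suc k * s + s" using assms(1) unfolding Bset_iff .
  have h1: "k*s + s + 2*k + 3 \<le> x" using conjunct1[OF h0] by simp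
  have h2: "x + 1 \<le> k*s + s + s" using conjunct2[OF h0] by simp
  note h = h1 h2
  have "s \<le> a" "a \<le> s + 2" using assms(2) by auto
  then show ?thesis unfolding Bset_iff using h by linarith
qed

lemma Bset_sub: "Bset s k \<subseteq> {k*s+1..<(k+1)*s}"
  by (auto simp: Bset_iff)

lemma card_Bset_le: "finite A \<Longrightarrow> A \<subseteq> Bset s k \<Longrightarrow> card A \<le> s - 1"
proof -
  assume "A \<subseteq> Bset s k"
  then have "A \<subseteq> {k*s+1..<(k+1)*s}" using Bset_sub by blast
  then have "card A \<le> card {k*s+1..<(k+1)*s}" by (intro card_mono) auto
  then show ?thesis by simp
qed

lemma top_sum: assumes fA: "finite A" and Au: "A \<subseteq> {..<u}" and m: "card A = m"
  shows "\<Sum>A \<le> \<Sum>{u-m..<u}" and "A \<noteq> {u-m..<u} \<Longrightarrow> \<Sum>A < \<Sum>{u-m..<u}"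
proof -
  define T where "T = {u-m..<u}"
  have mu: "m \<le> u" using card_mono[OF _ Au] m by simp
  have cT: "card T = m" unfolding T_def using mu by simp
  have fT: "finite T" unfolding T_def by simp
  have c1: "card (A - T) = card (T - A)"
  proof -
    have "card (A - T) = m - card (A \<inter> T)" using m fA by (simp add: card_Diff_subset_Int)
    moreover have "card (T - A) = m - card (T \<inter> A)" using cT fT by (simp add: card_Diff_subset_Int)
    moreover have "T \<inter> A = A \<inter> T" by blast
    ultimately show ?thesis by simp
  qed
  have lo: "x < u - m" if "x \<in> A - T" for x using that Au unfolding T_def by auto
  have hi: "u - m \<le> x" if "x \<in> T - A" for x using that unfolding T_def by auto
  have sA: "\<Sum>A = \<Sum>(A \<inter> T) + \<Sum>(A - T)"
    using sum.Int_Diff[OF fA, of id T] by simp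
  have sT: "\<Sum>T = \<Sum>(A \<inter> T) + \<Sum>(T - A)"
    using sum.Int_Diff[OF fT, of id A] by (simp add: Int_commute)
  have le1: "\<Sum>(A - T) \<le> card (A - T) * (u - m)"
    using sum_bounded_above[of "A - T" id "u - m"] lo by (simp add: less_imp_le)
  have le2: "card (T - A) * (u - m) \<le> \<Sum>(T - A)"
    using sum_bounded_below[of "T - A" "u - m" id] hi by simp
  show "\<Sum>A \<le> \<Sum>{u-m..<u}" using sA sT le1 le2 c1 unfolding T_def[symmetric] by simp
  assume ne: "A \<noteq> {u-m..<u}"
  have "A - T \<noteq> {}"
  proof
    assume "A - T = {}"
    then have "A \<subseteq> T" by blast
    then have "A = T" using card_subset_eq[OF fT] m cT by simp
    then show False using ne T_def by simp
  qed
  then have lt1: "\<Sum>(A - T) < card (A - T) * (u - m)"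
  proof -
    assume ne2: "A - T \<noteq> {}"
    have "\<Sum>(A - T) < (\<Sum>x\<in>A - T. u - m)"
      by (rule sum_strict_mono) (use fA ne2 lo in auto)
    then show ?thesis by simp
  qed
  show "\<Sum>A < \<Sum>{u-m..<u}" using sA sT lt1 le2 c1 unfolding T_def[symmetric] by simp
qed



lemma strict_gap: assumes "sorted_wrt (<) l" "i \<le> j" "j < length l"
  shows "l!i + (j - i) \<le> l!j"
  using assms(2,3)
proof (induction j)
  case 0 then show ?case by simp
next
  case (Suc j)
  show ?case
  proof (cases "i = Suc j")
    case True then show ?thesis by simp
  next
    case False
    then have "i \<le> j" using Suc.prems by simp
    then have "l!i + (j - i) \<le> l!j" using Suc by simp
    moreover have "l!j < l!(Suc j)" using sorted_wrt_nth_less[OF assms(1)] Suc.prems by simp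
    ultimately show ?thesis using \<open>i \<le> j\<close> by simp
  qed
qed

lemma exists_partition: assumes fX: "finite X" and z: "0 \<notin> X"
  shows "\<exists>mu. is_partition mu \<and> beta mu = X \<and> length mu = card X"
proof -
  obtain l where l: "sorted_wrt (<) l" "set l = X" "length l = card X"
    using finite_set_strict_sorted[OF fX] by blast
  define n where "n = length l"
  define f where "f m = l!m - m" for m
  define mu where "mu = rev (map f [0..<n])"
  have lpos: "m < l!m" if "m < n" for m
  proof -
    have "0 < n" using that by simp
    then have "l!0 \<in> X" using l(2) n_def by auto
    then have "0 < l!0" using z by (cases "l!0") auto
    moreover have "l!0 + (m - 0) \<le> l!m" using strict_gap[OF l(1), of 0 m] that n_def by simp
    ultimately show ?thesis by simp
  qed
  have fmono: "f i \<le> f j" if "i < j" "j < n" for i j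
    using strict_gap[OF l(1), of i j] that lpos[of i] unfolding f_def n_def by simp
  have len: "length mu = n" unfolding mu_def by simp
  have mun: "mu!i = f (n - Suc i)" if "i < n" for i
    unfolding mu_def using that by (simp add: rev_nth)
  have P: "is_partition mu"
    unfolding is_partition_def
  proof
    show "sorted_wrt (\<ge>) mu" unfolding mu_def sorted_wrt_rev
      by (auto simp: sorted_wrt_iff_nth_less intro: fmono)
    show "\<forall>x\<in>set mu. 0 < x" unfolding mu_def using lpos unfolding f_def by auto
  qed
  have btmu: "bt mu i = l!(n - Suc i)" if "i < n" for i
    using mun[OF that] lpos[of "n - Suc i"] that len unfolding bt_def f_def by simp
  have "beta mu = X"
  proof
    show "beta mu \<subseteq> X"
      using btmu l(2) n_def len by (auto simp: beta_bt[OF P])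
    show "X \<subseteq> beta mu"
    proof
      fix x assume "x \<in> X"
      then obtain m where m: "m < n" "x = l!m" using l(2) n_def by (auto simp: in_set_conv_nth)
      then have "x = bt mu (n - Suc m)" using btmu[of "n - Suc m"] by simp
      then show "x \<in> beta mu" using m len by (auto simp: beta_bt[OF P])
    qed
  qed
  then show ?thesis using P len n_def l(3) by auto
qed



lemma step: assumes C: "CC X s" and z: "0 \<notin> X" and fX: "finite X"
  and ne: "X \<inter> Bset s (Suc t) \<noteq> {}"
  shows "card (X \<inter> Bset s (Suc t)) + 2 \<le> card (X \<inter> Bset s t)"
proof -
  let ?A = "X \<inter> Bset s (Suc t)" let ?B = "X \<inter> Bset s t"
  have fA: "finite ?A" using fX by simp
  define q where "q = Max ?A"
  have qA: "q \<in> ?A" using Max_in[OF fA ne] q_def by simp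
  have down: "x - a \<in> ?B \<and> a \<le> x" if "x \<in> ?A" "a = s \<or> a = s+1 \<or> a = s+2" for x a
  proof -
    have "a \<le> x \<and> x - a \<in> Bset s t" using Bset_down[of x s t a] that by blast
    moreover have "x - a \<in> X" using C that calculation unfolding CC_def by blast
    ultimately show ?thesis by blast
  qed
  define img where "img = (\<lambda>x. x - (s+2)) ` ?A"
  have "inj_on (\<lambda>x. x - (s+2)) ?A"
  proof (rule inj_onI)
    fix a b assume ab: "a \<in> ?A" "b \<in> ?A" "a - (s+2) = b - (s+2)"
    have "s + 2 \<le> a" "s + 2 \<le> b" using down[OF ab(1)] down[OF ab(2)] by auto
    then show "a = b" using ab(3) by linarith
  qed
  then have cimg: "card img = card ?A" unfolding img_def by (simp add: card_image)
  have imgle: "y \<le> q - (s+2)" if "y \<in> img" for y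
    using that Max_ge[OF fA] unfolding img_def q_def by (auto intro: diff_le_mono)
  have q2: "s + 2 \<le> q" using down[OF qA] by simp
  have sub: "img \<union> {q - (s+1), q - s} \<subseteq> ?B" using down[OF qA] down unfolding img_def by auto
  have n1: "q - (s+1) \<notin> img" using imgle q2 by fastforce
  have n2: "q - s \<notin> img" using imgle q2 by fastforce
  have n3: "q - (s+1) \<noteq> q - s" using q2 by simp
  have fimg: "finite img" unfolding img_def using fA by simp
  have "card (img \<union> {q - (s+1), q - s}) = card img + 2"
    using n1 n2 n3 fimg by (simp add: card_insert_if)
  moreover have "card (img \<union> {q - (s+1), q - s}) \<le> card ?B" using sub fX by (intro card_mono) auto
  ultimately show ?thesis using cimg by simp
qed

theorem lemma3p1:
  fixes s k i :: nat and lam :: "nat list"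
  assumes "s \<ge> 3"
    and "is_partition lam" and "is_core3 s lam"
    and "\<forall>mu. is_partition mu \<and> is_core3 s mu \<longrightarrow> psize mu \<le> psize lam"
    and "k \<le> s div 2 - 1"
    and "i \<in> Bset s k" and "i \<in> beta lam"
  shows "{i .. (k+1)*s - 1} \<subseteq> beta lam"
proof (rule ccontr)
  assume "\<not> {i .. (k+1)*s - 1} \<subseteq> beta lam"
  then obtain j where j0: "j \<in> {i .. (k+1)*s - 1}" "j \<notin> beta lam" by blast
  then have j: "i \<le> j" "j \<le> (k+1)*s - 1" "j \<notin> beta lam" by auto
  define X where "X = beta lam"
  have fX: "finite X" unfolding X_def using finite_beta[OF assms(2)] .
  have z: "0 \<notin> X" unfolding X_def using zero_notin_beta[OF assms(2)] .
  have C: "CC X s" unfolding X_def using core_CC[OF assms(2,3)] assms(1) by simp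
  define K where "K = s div 2"
  define Xk where "Xk t = X \<inter> Bset s t" for t
  define m where "m t = card (Xk t)" for t
  define top where "top t = {(t+1)*s - m t ..< (t+1)*s}" for t
  define X' where "X' = (\<Union>t<K. top t)"
  have kK: "k < K" using assms(1,5) unfolding K_def by linarith
  have F1: "X = (\<Union>t<K. Xk t)"
  proof
    show "X \<subseteq> (\<Union>t<K. Xk t)"
    proof
      fix x assume "x \<in> X"
      then have "x \<in> Bset s (x div s) \<and> x div s < K" using level[OF C z _ assms(1)] K_def by blast
      then show "x \<in> (\<Union>t<K. Xk t)" using \<open>x \<in> X\<close> unfolding Xk_def by blast
    qed
    show "(\<Union>t<K. Xk t) \<subseteq> X" unfolding Xk_def by blast
  qed
  have F2: "Xk t \<inter> Xk t' = {}" if "t \<noteq> t'" for t t'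
    using Bset_div that unfolding Xk_def by blast
  have fXk: "finite (Xk t)" for t unfolding Xk_def using fX by simp
  have F3: "m t \<le> s - 1" for t unfolding m_def Xk_def
    by (rule card_Bset_le) (use fX in auto)
  have F4: "t*s + 1 \<le> x \<and> x < (t+1)*s" if "x \<in> top t" for t x
  proof -
    have "(t+1)*s = t*s + s" by simp
    then show ?thesis using that F3[of t] assms(1) unfolding top_def by auto
  qed
  have F4d: "x div s = t" if "x \<in> top t" for t x
    using F4[OF that] by (intro div_nat_eqI) (auto simp: algebra_simps)
  have F2': "top t \<inter> top t' = {}" if "t \<noteq> t'" for t t'
    using F4d that by blast
  have F5: "card (top t) = m t" for t
    using F3[of t] assms(1) unfolding top_def by (simp add: algebra_simps)
  have ftop: "finite (top t)" for t unfolding top_def by simp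
  have cardX': "card X' = card X"
  proof -
    have "card X' = (\<Sum>t<K. card (top t))" unfolding X'_def
      by (rule card_UN_disjoint) (use ftop F2' in auto)
    also have "\<dots> = (\<Sum>t<K. card (Xk t))" using F5 m_def by simp
    also have "\<dots> = card (\<Union>t<K. Xk t)"
      by (rule card_UN_disjoint[symmetric]) (use fXk F2 in auto)
    finally show ?thesis using F1 by simp
  qed
  have sumX: "\<Sum>X = (\<Sum>t<K. \<Sum>(Xk t))"
    unfolding F1 by (rule sum.UNION_disjoint) (use fXk F2 in auto)
  have sumX': "\<Sum>X' = (\<Sum>t<K. \<Sum>(top t))"
    unfolding X'_def by (rule sum.UNION_disjoint) (use ftop F2' in auto)
  have XkU: "Xk t \<subseteq> {..<(t+1)*s}" for t using Bset_sub[of s t] unfolding Xk_def by auto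
  have F8: "\<Sum>(Xk t) \<le> \<Sum>(top t)" for t
    unfolding top_def m_def using top_sum(1)[OF fXk XkU refl] .
  have ik: "i \<in> Xk k" unfolding Xk_def X_def using assms(6,7) by simp
  have F8s: "\<Sum>(Xk k) < \<Sum>(top k)"
  proof -
    have "Xk k \<noteq> top k"
    proof
      assume e: "Xk k = top k"
      then have "i \<in> top k" using ik by simp
      moreover have "0 < (k+1)*s" using assms(1) by simp
      ultimately have "j \<in> top k" using j unfolding top_def atLeastLessThan_iff by linarith
      then have "j \<in> X" using e unfolding Xk_def by blast
      then show False using j X_def by simp
    qed
    then show ?thesis unfolding top_def m_def using top_sum(2)[OF fXk XkU refl] by simp
  qed
  have sumlt: "\<Sum>X < \<Sum>X'"
    unfolding sumX sumX' by (rule sum_strict_mono_ex1) (use F8 F8s kK in auto)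
  have CX': "CC X' s"
    unfolding CC_def
  proof (intro ballI allI impI)
    fix x a assume x: "x \<in> X'" and a: "a = s \<or> a = s + 1 \<or> a = s + 2" and ax: "a \<le> x"
    then obtain t where t: "t < K" "x \<in> top t" unfolding X'_def by auto
    show "x - a \<in> X'"
    proof (cases t)
      case 0
      then show ?thesis using F4[OF t(2)] a ax by auto
    next
      case (Suc t')
      have "m t \<noteq> 0" using t(2) unfolding top_def by auto
      then have "Xk (Suc t') \<noteq> {}" using Suc unfolding m_def by auto
      then have st: "m (Suc t') + 2 \<le> m t'" using step[OF C z fX] unfolding m_def Xk_def by blast
      have e1: "(Suc t' + 1) * s = t'*s + 2*s" and e2: "(t'+1)*s = t'*s + s" by (simp_all add: algebra_simps)
      have "(Suc t' + 1)*s - m (Suc t') \<le> x" "x < (Suc t' + 1)*s" using t(2) Suc unfolding top_def by auto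
      then have "(t'+1)*s - m t' \<le> x - a" "x - a < (t'+1)*s" using e1 e2 st a ax F3[of t'] by auto
      then have "x - a \<in> top t'" unfolding top_def by simp
      moreover have "t' < K" using t Suc by simp
      ultimately show ?thesis unfolding X'_def by blast
    qed
  qed
  have fX': "finite X'" unfolding X'_def using ftop by simp
  have z': "0 \<notin> X'" unfolding X'_def using F4 by fastforce
  obtain mu where mu: "is_partition mu" "beta mu = X'" "length mu = card X'"
    using exists_partition[OF fX' z'] by blast
  have lenl: "length lam = card X" unfolding X_def using card_beta[OF assms(2)] by simp
  have "psize mu + (\<Sum>i<length mu. length mu - 1 - i) = \<Sum>X'"
    using psize_beta[OF mu(1)] mu(2) by simp
  moreover have "psize lam + (\<Sum>i<length lam. length lam - 1 - i) = \<Sum>X"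
    using psize_beta[OF assms(2)] X_def by simp
  moreover have "length mu = length lam" using mu(3) cardX' lenl by simp
  ultimately have "psize lam < psize mu" using sumlt by simp
  moreover have "is_core3 s mu" using CC_core[OF mu(1)] mu(2) CX' by simp
  ultimately show False using assms(4) mu(1) by fastforce
qed


end
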